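(* Let $G$ be a group acting on a set $X$, let $Y$ be a finite subset of $X$ and set \[\mu=\inf_{A\in\mathcal{P}_{\mathrm{fin}}(G)\setminus\{\emptyset\}}\frac{|A\cdot Y|}{|A|}.\] Then either $\mu=0$, or for every $\lambda\in[0,\mu]$ there exists a finite subgroup $H$ of $G$ containing $G_Y$ such that, writing $c_Y(A)=|A\cdot Y|-\lambda|A|$, \[c_Y(A)\geq c_Y(H)\geq|Y|-\lambda|H|\] for every nonempty finite subset $A$ of $G$.
   Context: $\mathcal{P}_{\mathrm{fin}}(G)$ is the set of finite subsets of $G$; $A\cdot Y=\{a\cdot y\mid a\in A,y\in Y\}$; $G_Y=\{g\in G\mid g\cdot Y=Y\}$ is the stabilizer of $Y$. *)

theory Defs
  imports Complex_Main "HOL-Algebra.Group_Action"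
begin

definition act_set :: "('a \<Rightarrow> 'b \<Rightarrow> 'b) \<Rightarrow> 'a set \<Rightarrow> 'b set \<Rightarrow> 'b set" where
  "act_set \<phi> A Y = {\<phi> a y | a y. a \<in> A \<and> y \<in> Y}"

definition set_stabilizer :: "('a, 'c) monoid_scheme \<Rightarrow> ('a \<Rightarrow> 'b \<Rightarrow> 'b) \<Rightarrow> 'b set \<Rightarrow> 'a set" where
  "set_stabilizer G \<phi> Y = {g \<in> carrier G. \<phi> g ` Y = Y}"

definition mu_ratio :: "('a, 'c) monoid_scheme \<Rightarrow> ('a \<Rightarrow> 'b \<Rightarrow> 'b) \<Rightarrow> 'b set \<Rightarrow> real" where
  "mu_ratio G \<phi> Y = (INF A \<in> {A. A \<subseteq> carrier G \<and> finite A \<and> A \<noteq> {}}.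
      real (card (act_set \<phi> A Y)) / real (card A))"

definition cY :: "('a \<Rightarrow> 'b \<Rightarrow> 'b) \<Rightarrow> 'b set \<Rightarrow> real \<Rightarrow> 'a set \<Rightarrow> real" where
  "cY \<phi> Y l A = real (card (act_set \<phi> A Y)) - l * real (card A)"

end

theory Submission
  imports Defs
begin


locale mt = group_action G X \<phi> for G :: "('a, 'c) monoid_scheme" (structure) and X :: "'b set" and \<phi> +
  fixes Y :: "'b set"
  assumes finY: "finite Y" and YX: "Y \<subseteq> X"
begin

definition PP :: "'a set set" where
  "PP = {A. A \<subseteq> carrier G \<and> finite A \<and> A \<noteq> {}}"

abbreviation AY where "AY A \<equiv> act_set \<phi> A Y"
abbreviation c where "c l A \<equiv> cY \<phi> Y l A"

lemma grp: "group G"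
  using group_hom group_hom.axioms(1) by blast

lemma AY_img: "AY A = (\<lambda>(a,y). \<phi> a y) ` (A \<times> Y)"
  unfolding act_set_def by auto

lemma AY_finite: "finite A \<Longrightarrow> finite (AY A)"
  using finY by (simp add: AY_img)

lemma AY_card_le: "finite A \<Longrightarrow> card (AY A) \<le> card A * card Y"
  unfolding AY_img by (metis card_cartesian_product card_image_le finY finite_cartesian_product)

lemma AY_sub: "A \<subseteq> carrier G \<Longrightarrow> AY A \<subseteq> X"
  unfolding act_set_def using YX element_image by blast

lemma AY_mono: "A \<subseteq> B \<Longrightarrow> AY A \<subseteq> AY B"
  unfolding act_set_def by blast

lemma AY_Un: "AY (A \<union> B) = AY A \<union> AY B"
  unfolding act_set_def by blast

lemma AY_Int: "AY (A \<inter> B) \<subseteq> AY A \<inter> AY B"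
  unfolding act_set_def by blast

lemma phi_one: "y \<in> X \<Longrightarrow> \<phi> \<one> y = y"
  by (metis id_eq_one restrict_apply')

lemma Y_sub_AY: "\<one> \<in> A \<Longrightarrow> Y \<subseteq> AY A"
  unfolding act_set_def using phi_one YX by force

lemma c_def2: "c l A = real (card (AY A)) - l * real (card A)"
  by (simp add: cY_def)

lemma c_shift: "c l' A = c l A - (l' - l) * real (card A)"
  by (simp add: cY_def algebra_simps)

lemma submod:
  assumes "finite A" "finite B"
  shows "c l (A \<union> B) + c l (A \<inter> B) \<le> c l A + c l B"
proof -
  have f: "finite (AY A)" "finite (AY B)" using assms AY_finite by auto
  have n0: "card (AY (A \<inter> B)) \<le> card (AY A \<inter> AY B)"
  proof (rule card_mono)
    show "finite (AY A \<inter> AY B)" using f(1) by simp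
    show "AY (A \<inter> B) \<subseteq> AY A \<inter> AY B" by (rule AY_Int)
  qed
  have n1: "card (AY A \<union> AY B) + card (AY A \<inter> AY B) = card (AY A) + card (AY B)"
    using card_Un_Int[OF f] by simp
  have n2: "card (A \<union> B) + card (A \<inter> B) = card A + card B"
    using card_Un_Int[OF assms] by simp
  have n3: "card (AY A \<union> AY B) + card (AY (A \<inter> B)) \<le> card (AY A) + card (AY B)"
    using n0 n1 by linarith
  have h1: "real (card (AY A \<union> AY B)) + real (card (AY (A \<inter> B))) \<le> real (card (AY A)) + real (card (AY B))"
    using n3 by (simp only: of_nat_add[symmetric] of_nat_le_iff)
  have h2: "real (card (A \<union> B)) + real (card (A \<inter> B)) = real (card A) + real (card B)"
    using n2 by (simp only: of_nat_add[symmetric] of_nat_eq_iff)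
  have h3: "l * real (card (A \<union> B)) + l * real (card (A \<inter> B)) = l * real (card A) + l * real (card B)"
    using h2 by (simp only: distrib_left[symmetric])
  show ?thesis unfolding c_def2 AY_Un using h1 h3 by linarith
qed

lemma translate:
  assumes g: "g \<in> carrier G" and A: "A \<subseteq> carrier G"
  shows "c l ((\<otimes>) g ` A) = c l A" and "card ((\<otimes>) g ` A) = card A"
proof -
  interpret group G by (rule grp)
  have inj: "inj_on ((\<otimes>) g) A"
    using inj_on_subset[OF inj_on_cmult[OF g] A] .
  show cc: "card ((\<otimes>) g ` A) = card A" using card_image[OF inj] .
  have e: "AY ((\<otimes>) g ` A) = \<phi> g ` AY A"
  proof (intro equalityI subsetI)
      fix z assume "z \<in> AY ((\<otimes>) g ` A)"
      then obtain a y where ay: "a \<in> A" "y \<in> Y" "z = \<phi> (g \<otimes> a) y" unfolding act_set_def by blast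
      have "a \<in> carrier G" "y \<in> X" using ay A YX by auto
      then have "z = \<phi> g (\<phi> a y)" using composition_rule g ay(3) by simp
      moreover have "\<phi> a y \<in> AY A" using ay unfolding act_set_def by blast
      ultimately show "z \<in> \<phi> g ` AY A" by blast
    next
      fix z assume "z \<in> \<phi> g ` AY A"
      then obtain a y where ay: "a \<in> A" "y \<in> Y" "z = \<phi> g (\<phi> a y)" unfolding act_set_def by blast
      have "a \<in> carrier G" "y \<in> X" using ay A YX by auto
      then have "z = \<phi> (g \<otimes> a) y" using composition_rule g ay(3) by simp
      moreover have "g \<otimes> a \<in> (\<otimes>) g ` A" using ay by blast
      ultimately show "z \<in> AY ((\<otimes>) g ` A)" using ay unfolding act_set_def by blast
  qed
  have "inj_on (\<phi> g) (AY A)" using inj_on_subset[OF inj_prop[OF g] AY_sub[OF A]] .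
  then have "card (\<phi> g ` AY A) = card (AY A)" by (rule card_image)
  then show "c l ((\<otimes>) g ` A) = c l A" unfolding c_def2 e cc by simp
qed

lemma one_PP: "{\<one>} \<in> PP"
proof -
  interpret group G by (rule grp)
  show ?thesis unfolding PP_def by simp
qed

lemma PP_ne: "PP \<noteq> {}" using one_PP by blast

definition ratio where "ratio A = real (card (AY A)) / real (card A)"

lemma mu_eq: "mu_ratio G \<phi> Y = Inf (ratio ` PP)"
  unfolding mu_ratio_def PP_def ratio_def by simp

lemma bdd: "bdd_below (ratio ` PP)"
  unfolding ratio_def by (intro bdd_belowI[where m=0]) auto

lemma mu_le: "A \<in> PP \<Longrightarrow> mu_ratio G \<phi> Y \<le> ratio A"
  unfolding mu_eq by (rule cInf_lower) (use bdd in auto)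

lemma mu_nonneg: "0 \<le> mu_ratio G \<phi> Y"
  unfolding mu_eq using PP_ne by (intro cInf_greatest) (auto simp: ratio_def)

lemma c_lower:
  assumes "A \<in> PP"
  shows "(mu_ratio G \<phi> Y - l) * real (card A) \<le> c l A"
proof -
  have pos: "real (card A) > 0" using assms unfolding PP_def by auto
  have "mu_ratio G \<phi> Y * real (card A) \<le> real (card (AY A))"
    using mu_le[OF assms] pos unfolding ratio_def by (simp add: pos_le_divide_eq)
  then show ?thesis unfolding c_def2 by (simp add: algebra_simps)
qed

lemma c_one: "c l {\<one>} \<le> real (card Y) - l"
proof -
  have "card (AY {\<one>}) \<le> card Y" using AY_card_le[of "{\<one>}"] by simp
  then show ?thesis unfolding c_def2 by simp
qed

definition minz where "minz l A \<longleftrightarrow> A \<in> PP \<and> (\<forall>B\<in>PP. c l A \<le> c l B)"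
definition maxmin where "maxmin l A \<longleftrightarrow> minz l A \<and> (\<forall>B. minz l B \<longrightarrow> card B \<le> card A)"

lemma exists_maxmin:
  assumes l0: "0 \<le> l" and lmu: "l < mu_ratio G \<phi> Y"
  shows "\<exists>A. maxmin l A"
proof -
  define \<mu> where "\<mu> = mu_ratio G \<phi> Y"
  define N where "N = nat \<lceil>real (card Y) / (\<mu> - l)\<rceil>"
  have pos: "\<mu> - l > 0" using lmu \<mu>_def by simp
  have cardN: "card A \<le> N" if "A \<in> PP" "c l A \<le> real (card Y)" for A
  proof -
    have "(\<mu> - l) * real (card A) \<le> real (card Y)"
      using c_lower[OF that(1), of l] that(2) \<mu>_def by simp
    then have "real (card A) \<le> real (card Y) / (\<mu> - l)"
      using pos by (simp add: mult.commute pos_le_divide_eq)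
    then show ?thesis unfolding N_def by linarith
  qed
  define Q where "Q = {A\<in>PP. c l A \<le> real (card Y)}"
  have oneQ: "{\<one>} \<in> Q" unfolding Q_def using one_PP c_one[of l] l0 by simp
  have "c l ` Q \<subseteq> (\<lambda>(m, n). real m - l * real n) ` ({..N * card Y} \<times> {..N})"
  proof
    fix v assume "v \<in> c l ` Q"
    then obtain A where A: "A \<in> Q" "v = c l A" by blast
    then have AP: "A \<in> PP" and cA: "card A \<le> N" using cardN unfolding Q_def by auto
    have "card (AY A) \<le> card A * card Y" using AY_card_le AP PP_def by auto
    also have "\<dots> \<le> N * card Y" using cA by simp
    finally have "card (AY A) \<le> N * card Y" .
    then show "v \<in> (\<lambda>(m, n). real m - l * real n) ` ({..N * card Y} \<times> {..N})"
      using A cA unfolding c_def2 by (intro image_eqI[where x="(card (AY A), card A)"]) auto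
  qed
  then have finV: "finite (c l ` Q)" by (rule finite_subset) auto
  have neV: "c l ` Q \<noteq> {}" using oneQ by blast
  obtain A0 where A0: "A0 \<in> Q" "c l A0 = Min (c l ` Q)"
    using Min_in[OF finV neV] by auto
  have minA0: "minz l A0"
    unfolding minz_def
  proof (intro conjI ballI)
    show "A0 \<in> PP" using A0(1) unfolding Q_def by blast
    fix B assume B: "B \<in> PP"
    show "c l A0 \<le> c l B"
    proof (cases "B \<in> Q")
      case True
      then have "Min (c l ` Q) \<le> c l B" using finV by (intro Min_le) auto
      then show ?thesis using A0(2) by linarith
    next
      case False then have "c l B > real (card Y)" using B unfolding Q_def by auto
      moreover have "c l A0 \<le> real (card Y)" using A0(1) unfolding Q_def by blast
      ultimately show ?thesis by linarith
    qed
  qed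
  have minzQ: "B \<in> Q" if "minz l B" for B
  proof -
    have BP: "B \<in> PP" using that unfolding minz_def by blast
    have "c l B \<le> c l {\<one>}" using that one_PP unfolding minz_def by blast
    also have "\<dots> \<le> real (card Y)" using c_one[of l] l0 by linarith
    finally show ?thesis using BP unfolding Q_def by blast
  qed
  define S where "S = card ` {B. minz l B}"
  have "S \<subseteq> {..N}"
  proof
    fix n assume "n \<in> S"
    then obtain B where B: "minz l B" "n = card B" unfolding S_def by blast
    then have "B \<in> Q" using minzQ by blast
    then have "card B \<le> N" using cardN unfolding Q_def by blast
    then show "n \<in> {..N}" using B by simp
  qed
  then have finS: "finite S" using finite_subset by blast
  have neS: "S \<noteq> {}" using minA0 unfolding S_def by blast
  have "Max S \<in> S" using Max_in[OF finS neS] .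
  then obtain A1 where A1: "minz l A1" "card A1 = Max S"
    unfolding S_def by (metis (no_types, lifting) imageE mem_Collect_eq)
  have "maxmin l A1" unfolding maxmin_def
  proof (intro conjI allI impI)
    show "minz l A1" by (rule A1(1))
    fix B assume "minz l B"
    then have "card B \<in> S" unfolding S_def by blast
    then show "card B \<le> card A1" using A1(2) finS by simp
  qed
  then show ?thesis by blast
qed

end

context mt begin
lemma maxmin_PP: "maxmin l A \<Longrightarrow> A \<in> PP"
  unfolding maxmin_def minz_def by blast

lemma minz_PP: "minz l A \<Longrightarrow> A \<in> PP"
  unfolding minz_def by blast

lemma maxmin_translate:
  assumes m: "maxmin l A" and a: "a \<in> A"
  shows "maxmin l ((\<otimes>) (inv a) ` A)"
proof -
  interpret group G by (rule grp)
  have AP: "A \<in> PP" using maxmin_PP[OF m] .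
  then have Ac: "A \<subseteq> carrier G" "finite A" unfolding PP_def by auto
  have ia: "inv a \<in> carrier G" using a Ac by auto
  have cc: "c l ((\<otimes>) (inv a) ` A) = c l A" "card ((\<otimes>) (inv a) ` A) = card A"
    using translate[OF ia Ac(1)] by auto
  have IP: "(\<otimes>) (inv a) ` A \<in> PP" using Ac ia a unfolding PP_def by auto
  show ?thesis unfolding maxmin_def minz_def
  proof (intro conjI ballI allI impI)
    show "(\<otimes>) (inv a) ` A \<in> PP" by (rule IP)
    fix B assume "B \<in> PP"
    then show "c l ((\<otimes>) (inv a) ` A) \<le> c l B" using m cc unfolding maxmin_def minz_def by simp
  next
    fix B assume "B \<in> PP \<and> (\<forall>C\<in>PP. c l B \<le> c l C)"
    then have "minz l B" unfolding minz_def by blast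
    then show "card B \<le> card ((\<otimes>) (inv a) ` A)" using m cc unfolding maxmin_def by simp
  qed
qed

lemma maxmin_closed:
  assumes m: "maxmin l H" and one: "\<one> \<in> H" and g: "g \<in> H"
  shows "(\<otimes>) g ` H \<subseteq> H"
proof -
  interpret group G by (rule grp)
  have HP: "H \<in> PP" using maxmin_PP[OF m] .
  then have Hc: "H \<subseteq> carrier G" "finite H" unfolding PP_def by auto
  have gc: "g \<in> carrier G" using g Hc by auto
  define gH where "gH = (\<otimes>) g ` H"
  have cc: "c l gH = c l H" using translate[OF gc Hc(1)] gH_def by auto
  have gHc: "gH \<subseteq> carrier G" "finite gH" using gc Hc unfolding gH_def by auto
  have "g \<in> gH" unfolding gH_def using one gc by (intro image_eqI[where x="\<one>"]) auto
  then have IP: "H \<inter> gH \<in> PP" using g Hc gHc unfolding PP_def by auto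
  have UP: "H \<union> gH \<in> PP" using Hc gHc g unfolding PP_def by auto
  have mH: "\<And>B. B \<in> PP \<Longrightarrow> c l H \<le> c l B" using m unfolding maxmin_def minz_def by blast
  have "c l (H \<union> gH) + c l (H \<inter> gH) \<le> c l H + c l gH" using submod Hc gHc by blast
  moreover have "c l H \<le> c l (H \<inter> gH)" using mH IP by blast
  ultimately have le: "c l (H \<union> gH) \<le> c l H" using cc by linarith
  have "minz l (H \<union> gH)" unfolding minz_def using UP le mH by force
  then have "card (H \<union> gH) \<le> card H" using m unfolding maxmin_def by blast
  then have "H = H \<union> gH" using card_seteq[of "H \<union> gH" H] Hc gHc by blast
  then show ?thesis unfolding gH_def by blast
qed

lemma maxmin_subgroup:
  assumes m: "maxmin l H" and one: "\<one> \<in> H"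
  shows "subgroup H G"
proof -
  interpret group G by (rule grp)
  have HP: "H \<in> PP" using maxmin_PP[OF m] .
  then have Hc: "H \<subseteq> carrier G" "finite H" unfolding PP_def by auto
  show ?thesis
  proof (rule subgroupI)
    show "H \<subseteq> carrier G" "H \<noteq> {}" using Hc one by auto
  next
    fix a b assume "a \<in> H" "b \<in> H"
    then show "a \<otimes> b \<in> H" using maxmin_closed[OF m one] by blast
  next
    fix a assume a: "a \<in> H"
    have ac: "a \<in> carrier G" using a Hc by auto
    have "inj_on ((\<otimes>) a) H" using ac Hc inj_on_cmult inj_on_subset by blast
    then have "(\<otimes>) a ` H = H" using endo_inj_surj Hc(2) maxmin_closed[OF m one a] by blast
    then obtain h where h: "h \<in> H" "a \<otimes> h = \<one>" using one by (metis imageE)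
    have hc: "h \<in> carrier G" using h Hc by auto
    have "inv a = h" using h(2) ac hc by (metis inv_equality l_inv m_assoc l_one r_one inv_closed)
    then show "inv a \<in> H" using h by simp
  qed
qed

lemma maxmin_stab:
  assumes m: "maxmin l H" and l0: "0 \<le> l" and s: "s \<in> set_stabilizer G \<phi> Y" and one: "\<one> \<in> H"
  shows "s \<in> H"
proof -
  interpret group G by (rule grp)
  have HP: "H \<in> PP" using maxmin_PP[OF m] .
  then have Hc: "H \<subseteq> carrier G" "finite H" "H \<noteq> {}" unfolding PP_def by auto
  have sc: "s \<in> carrier G" and sY: "\<phi> s ` Y = Y" using s unfolding set_stabilizer_def by auto
  define B where "B = H \<union> (\<lambda>h. h \<otimes> s) ` H"
  have Bc: "B \<subseteq> carrier G" "finite B" using Hc sc unfolding B_def by auto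
  have BP: "B \<in> PP" using Bc Hc unfolding PP_def B_def by auto
  have "AY ((\<lambda>h. h \<otimes> s) ` H) \<subseteq> AY H"
  proof
    fix z assume "z \<in> AY ((\<lambda>h. h \<otimes> s) ` H)"
    then obtain h y where hy: "h \<in> H" "y \<in> Y" "z = \<phi> (h \<otimes> s) y" unfolding act_set_def by blast
    then have "z = \<phi> h (\<phi> s y)" using composition_rule YX Hc sc by blast
    moreover have "\<phi> s y \<in> Y" using sY hy by blast
    ultimately show "z \<in> AY H" using hy unfolding act_set_def by blast
  qed
  then have eq: "AY B = AY H" unfolding B_def AY_Un by blast
  have "card H \<le> card B" using Bc unfolding B_def by (intro card_mono) auto
  then have "c l B \<le> c l H" unfolding c_def2 eq using l0 by (simp add: mult_left_mono)
  then have "minz l B" using m BP unfolding maxmin_def minz_def by force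
  then have "card B \<le> card H" using m unfolding maxmin_def by blast
  then have "H = B" using card_seteq[of B H] Bc unfolding B_def by blast
  moreover have "s \<in> B" unfolding B_def using one sc by (intro UnI2 image_eqI[where x="\<one>"]) auto
  ultimately show ?thesis by simp
qed

lemma chain:
  assumes m: "minz l H" and m': "maxmin l' H'" and ll: "l \<le> l'" and ne: "H \<inter> H' \<noteq> {}"
  shows "H \<subseteq> H'"
proof -
  have HP: "H \<in> PP" using minz_PP[OF m] .
  then have Hc: "H \<subseteq> carrier G" "finite H" unfolding PP_def by auto
  have HP': "H' \<in> PP" using maxmin_PP[OF m'] .
  then have Hc': "H' \<subseteq> carrier G" "finite H'" unfolding PP_def by auto
  have IP: "H \<inter> H' \<in> PP" using Hc Hc' ne unfolding PP_def by auto
  have UP: "H \<union> H' \<in> PP" using Hc Hc' ne unfolding PP_def by auto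
  have "c l H \<le> c l (H \<inter> H')" using m IP unfolding minz_def by blast
  moreover have "card (H \<inter> H') \<le> card H" using Hc by (intro card_mono) auto
  moreover have "(l' - l) * real (card (H \<inter> H')) \<le> (l' - l) * real (card H)"
    using calculation(2) ll by (intro mult_left_mono) auto
  ultimately have a: "c l' H \<le> c l' (H \<inter> H')"
    using c_shift[of l' H l] c_shift[of l' "H \<inter> H'" l] by linarith
  have "c l' (H \<union> H') + c l' (H \<inter> H') \<le> c l' H + c l' H'" using submod Hc Hc' by blast
  then have le: "c l' (H \<union> H') \<le> c l' H'" using a by linarith
  have "minz l' (H \<union> H')" unfolding minz_def using UP le m' unfolding maxmin_def minz_def by force
  then have "card (H \<union> H') \<le> card H'" using m' unfolding maxmin_def by blast
  then have "H' = H \<union> H'" using card_seteq[of "H \<union> H'" H'] Hc Hc' by blast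
  then show ?thesis by blast
qed

definition good where "good l H \<longleftrightarrow> subgroup H G \<and> finite H \<and> set_stabilizer G \<phi> Y \<subseteq> H \<and> maxmin l H"

lemma K_exists:
  assumes l0: "0 \<le> l" and lmu: "l < mu_ratio G \<phi> Y"
  shows "\<exists>H. good l H"
proof -
  interpret group G by (rule grp)
  obtain A where A: "maxmin l A" using exists_maxmin[OF l0 lmu] by blast
  then have "A \<in> PP" by (rule maxmin_PP)
  then obtain a where a: "a \<in> A" "A \<subseteq> carrier G" unfolding PP_def by auto
  define H where "H = (\<otimes>) (inv a) ` A"
  have mH: "maxmin l H" unfolding H_def using maxmin_translate[OF A a(1)] .
  have one: "\<one> \<in> H" unfolding H_def using a by (intro image_eqI[where x=a]) auto
  have "H \<in> PP" using maxmin_PP[OF mH] .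
  then have "finite H" unfolding PP_def by auto
  moreover have "subgroup H G" using maxmin_subgroup[OF mH one] .
  moreover have "set_stabilizer G \<phi> Y \<subseteq> H" using maxmin_stab[OF mH l0 _ one] by blast
  ultimately show ?thesis using mH unfolding good_def by blast
qed

end

context mt begin

definition orb where "orb H y = (\<lambda>g. \<phi> g y) ` H"
definition stH where "stH H y = {g \<in> H. \<phi> g y = y}"

lemma orb_stab:
  assumes H: "subgroup H G" and y: "y \<in> X"
  shows "card (orb H y) * card (stH H y) = card H"
proof -
  interpret Ha: group_action "G\<lparr>carrier := H\<rparr>" X \<phi> using induced_action[OF H] .
  have "card (orbit (G\<lparr>carrier := H\<rparr>) \<phi> y) * card (stabilizer (G\<lparr>carrier := H\<rparr>) \<phi> y) = order (G\<lparr>carrier := H\<rparr>)"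
    using Ha.orbit_stabilizer_theorem[OF y] .
  moreover have "orbit (G\<lparr>carrier := H\<rparr>) \<phi> y = orb H y" unfolding orbit_def orb_def by auto
  moreover have "stabilizer (G\<lparr>carrier := H\<rparr>) \<phi> y = stH H y" unfolding stabilizer_def stH_def by auto
  moreover have "order (G\<lparr>carrier := H\<rparr>) = card H" unfolding order_def by simp
  ultimately show ?thesis by simp
qed

lemma orb_self:
  assumes H: "subgroup H G" and y: "y \<in> X"
  shows "y \<in> orb H y"
proof -
  have "\<one> \<in> H" using H subgroup.one_closed by blast
  then show ?thesis unfolding orb_def using phi_one[OF y] by (intro image_eqI[where x="\<one>"]) auto
qed

lemma orb_eq:
  assumes H: "subgroup H G" and y: "y \<in> X" and z: "z \<in> orb H y"
  shows "orb H z = orb H y"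
proof -
  interpret group G by (rule grp)
  obtain h where h: "h \<in> H" "z = \<phi> h y" using z unfolding orb_def by blast
  have Hc: "H \<subseteq> carrier G" using H subgroup.subset by blast
  have hc: "h \<in> carrier G" using h Hc by blast
  show ?thesis
  proof (intro equalityI subsetI)
    fix w assume "w \<in> orb H z"
    then obtain g where g: "g \<in> H" "w = \<phi> g z" unfolding orb_def by blast
    have gc: "g \<in> carrier G" using g Hc by blast
    have "w = \<phi> (g \<otimes> h) y" using g h composition_rule[OF y gc hc] by simp
    moreover have "g \<otimes> h \<in> H" using subgroup.m_closed[OF H g(1) h(1)] .
    ultimately show "w \<in> orb H y" unfolding orb_def by blast
  next
    fix w assume "w \<in> orb H y"
    then obtain g where g: "g \<in> H" "w = \<phi> g y" unfolding orb_def by blast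
    have gc: "g \<in> carrier G" using g Hc by blast
    have ihc: "inv h \<in> carrier G" using hc by simp
    have "g \<otimes> inv h \<in> H" using subgroup.m_closed[OF H g(1) subgroup.m_inv_closed[OF H h(1)]] .
    moreover have "\<phi> (g \<otimes> inv h) z = w"
    proof -
      have "\<phi> (g \<otimes> inv h) z = \<phi> ((g \<otimes> inv h) \<otimes> h) y"
        using h(2) composition_rule[OF y _ hc, of "g \<otimes> inv h"] gc ihc by simp
      also have "(g \<otimes> inv h) \<otimes> h = g" using gc hc by (simp add: m_assoc)
      finally show ?thesis using g(2) by simp
    qed
    ultimately show "w \<in> orb H z" unfolding orb_def by blast
  qed
qed

lemma orb_finite: "finite H \<Longrightarrow> finite (orb H y)"
  unfolding orb_def by simp

lemma orbit_sum:
  assumes H: "subgroup H G" and fH: "finite H"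
  shows "real (card (AY H)) = (\<Sum>y\<in>Y. real (card (orb H y)) / real (card (orb H y \<inter> Y)))"
proof -
  define Os where "Os = orb H ` Y"
  have U: "AY H = \<Union> Os" unfolding Os_def orb_def act_set_def by auto
  have finO: "finite Os" unfolding Os_def using finY by simp
  have disj: "pairwise disjnt Os"
  proof (rule pairwiseI)
    fix q1 q2 assume q1: "q1 \<in> Os" and q2: "q2 \<in> Os" and ne: "q1 \<noteq> q2"
    obtain y1 where y1: "y1 \<in> Y" "q1 = orb H y1" using q1 Os_def by blast
    obtain y2 where y2: "y2 \<in> Y" "q2 = orb H y2" using q2 Os_def by blast
    show "disjnt q1 q2"
    proof (rule ccontr)
      assume "\<not> disjnt q1 q2"
      then obtain z where z: "z \<in> q1" "z \<in> q2" unfolding disjnt_def by blast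
      have "orb H z = q1" using orb_eq[OF H _ ] y1 z YX by blast
      moreover have "orb H z = q2" using orb_eq[OF H _ ] y2 z YX by blast
      ultimately show False using ne by simp
    qed
  qed
  have "card (AY H) = sum card Os"
    unfolding U by (rule card_Union_disjoint[OF disj]) (use orb_finite fH Os_def in blast)
  then have c1: "real (card (AY H)) = (\<Sum>q\<in>Os. real (card q))" by simp
  have "(\<Sum>y\<in>Y. real (card (orb H y)) / real (card (orb H y \<inter> Y)))
      = (\<Sum>q\<in>Os. \<Sum>y\<in>{x. x \<in> Y \<and> orb H x = q}. real (card (orb H y)) / real (card (orb H y \<inter> Y)))"
    unfolding Os_def by (rule sum.image_gen[OF finY])
  also have "\<dots> = (\<Sum>q\<in>Os. real (card q))"
  proof (rule sum.cong[OF refl])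
    fix q assume "q \<in> Os"
    then obtain y0 where y0: "y0 \<in> Y" "q = orb H y0" using Os_def by blast
    have y0X: "y0 \<in> X" using y0 YX by blast
    have S: "{x. x \<in> Y \<and> orb H x = q} = q \<inter> Y"
    proof (intro equalityI subsetI)
      fix x assume "x \<in> {x. x \<in> Y \<and> orb H x = q}"
      then have "x \<in> Y" "orb H x = q" by auto
      then show "x \<in> q \<inter> Y" using orb_self[OF H] YX by blast
    next
      fix x assume x: "x \<in> q \<inter> Y"
      then have "orb H x = q" using orb_eq[OF H y0X] y0 by blast
      then show "x \<in> {x. x \<in> Y \<and> orb H x = q}" using x by blast
    qed
    have fin: "finite (q \<inter> Y)" using finY by simp
    have "y0 \<in> q \<inter> Y" using y0 orb_self[OF H y0X] by blast
    then have pos: "card (q \<inter> Y) > 0" using fin card_gt_0_iff by blast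
    have "(\<Sum>y\<in>{x. x \<in> Y \<and> orb H x = q}. real (card (orb H y)) / real (card (orb H y \<inter> Y)))
        = (\<Sum>y\<in>q \<inter> Y. real (card q) / real (card (q \<inter> Y)))"
      unfolding S
    proof (rule sum.cong[OF refl])
      fix y assume "y \<in> q \<inter> Y"
      then have "y \<in> orb H y0" using y0(2) by blast
      then have "orb H y = q" using orb_eq[OF H y0X] y0(2) by simp
      then show "real (card (orb H y)) / real (card (orb H y \<inter> Y)) = real (card q) / real (card (q \<inter> Y))" by simp
    qed
    also have "\<dots> = real (card (q \<inter> Y)) * (real (card q) / real (card (q \<inter> Y)))" by simp
    also have "\<dots> = real (card q)" using pos by simp
    finally show "(\<Sum>y\<in>{x. x \<in> Y \<and> orb H x = q}. real (card (orb H y)) / real (card (orb H y \<inter> Y))) = real (card q)" .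
  qed
  finally show ?thesis using c1 by simp
qed

end

context mt begin

abbreviation mu where "mu \<equiv> mu_ratio G \<phi> Y"

lemma good_one: "good l H \<Longrightarrow> \<one> \<in> H"
  unfolding good_def using subgroup.one_closed by blast

lemma good_PP: "good l H \<Longrightarrow> H \<in> PP"
  unfolding good_def using maxmin_PP by blast

lemma good_minz: "good l H \<Longrightarrow> minz l H"
  unfolding good_def maxmin_def by blast

lemma c_mono_l: "l \<le> l' \<Longrightarrow> c l' A \<le> c l A"
  using c_shift[of l' A l] by (simp add: mult_nonneg_nonneg)

lemma c_mu_nonneg: "A \<in> PP \<Longrightarrow> 0 \<le> c mu A"
  using c_lower[of A mu] by simp

definition K where "K l = (SOME H. good l H)"

lemma K_good: "0 \<le> l \<Longrightarrow> l < mu \<Longrightarrow> good l (K l)"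
  unfolding K_def using K_exists someI_ex by metis

lemma K_mono:
  assumes "0 \<le> l" "l \<le> l'" "l' < mu"
  shows "K l \<subseteq> K l'"
proof -
  have g: "good l (K l)" using K_good assms by simp
  have g': "good l' (K l')" using K_good assms by simp
  have "\<one> \<in> K l \<inter> K l'" using good_one[OF g] good_one[OF g'] by simp
  then have ne: "K l \<inter> K l' \<noteq> {}" by blast
  show ?thesis using chain[OF good_minz[OF g] _ assms(2) ne] g' unfolding good_def by simp
qed

lemma K_fin: "0 \<le> l \<Longrightarrow> l < mu \<Longrightarrow> finite (K l)"
  using K_good unfolding good_def by simp

lemma K_sub: "0 \<le> l \<Longrightarrow> l < mu \<Longrightarrow> subgroup (K l) G"
  using K_good unfolding good_def by simp

lemma K_bounds:
  assumes "0 \<le> l" "l < mu"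
  shows "0 \<le> c mu (K l)" "c mu (K l) \<le> real (card Y)"
proof -
  have g: "good l (K l)" using K_good assms by simp
  show "0 \<le> c mu (K l)" using c_mu_nonneg good_PP[OF g] by simp
  have "c mu (K l) \<le> c l (K l)" using c_mono_l assms by simp
  also have "\<dots> \<le> c l {\<one>}" using good_minz[OF g] one_PP unfolding minz_def by simp
  also have "\<dots> \<le> real (card Y)" using c_one[of l] assms by simp
  finally show "c mu (K l) \<le> real (card Y)" .
qed

lemma ev_ge:
  assumes "l0 < mu"
  shows "eventually (\<lambda>l. l0 \<le> l \<and> l < mu) (at_left mu)"
  using eventually_at_left_real[OF assms] by (rule eventually_mono) auto

lemma ev_obtain:
  assumes ev: "eventually P (at_left mu)" and mpos: "0 < mu"
  shows "\<exists>l0. 0 \<le> l0 \<and> l0 < mu \<and> (\<forall>l. l0 \<le> l \<and> l < mu \<longrightarrow> P l)"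
proof -
  obtain b where b: "b < mu" "\<forall>y>b. y < mu \<longrightarrow> P y"
    using ev unfolding eventually_at_left_field by blast
  define l0 where "l0 = max ((b + mu) / 2) 0"
  have hb: "b < (b + mu) / 2" "(b + mu) / 2 < mu" using b by auto
  have "0 \<le> l0" "l0 < mu" "b < l0" using hb mpos unfolding l0_def by (auto simp: less_max_iff_disj)
  then show ?thesis using b by (intro exI[of _ l0]) auto
qed

lemma ev_contra:
  assumes "eventually (\<lambda>l. False) (at_left (mu::real))"
  shows False
  using assms by simp

lemma mono_dichot:
  fixes f :: "real \<Rightarrow> nat"
  assumes mono: "\<And>l l'. 0 \<le> l \<Longrightarrow> l \<le> l' \<Longrightarrow> l' < mu \<Longrightarrow> f l \<le> f l'" and mpos: "0 < mu"
  shows "(\<exists>l0. 0 \<le> l0 \<and> l0 < mu \<and> (\<forall>l. l0 \<le> l \<and> l < mu \<longrightarrow> f l = f l0))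
         \<or> (\<forall>N. eventually (\<lambda>l. N \<le> f l) (at_left mu))"
proof (cases "\<exists>N. \<forall>l. 0 \<le> l \<and> l < mu \<longrightarrow> f l \<le> N")
  case True
  then obtain N where N: "\<And>l. 0 \<le> l \<Longrightarrow> l < mu \<Longrightarrow> f l \<le> N" by blast
  define S where "S = f ` {0..<mu}"
  have "S \<subseteq> {..N}" unfolding S_def using N by auto
  then have finS: "finite S" using finite_subset by blast
  have neS: "S \<noteq> {}" unfolding S_def using mpos by auto
  have "Max S \<in> S" using Max_in[OF finS neS] .
  then obtain l0 where l0: "0 \<le> l0" "l0 < mu" "f l0 = Max S" unfolding S_def by auto
  have "\<forall>l. l0 \<le> l \<and> l < mu \<longrightarrow> f l = f l0"
  proof (intro allI impI)
    fix l assume l: "l0 \<le> l \<and> l < mu"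
    have "f l0 \<le> f l" using mono[of l0 l] l0(1) l by simp
    moreover have "f l \<in> S" unfolding S_def using l l0 by auto
    then have "f l \<le> Max S" using finS by simp
    ultimately show "f l = f l0" using l0 by simp
  qed
  then show ?thesis using l0 by blast
next
  case False
  have "eventually (\<lambda>l. N \<le> f l) (at_left mu)" for N
  proof -
    obtain l1 where l1: "0 \<le> l1" "l1 < mu" "\<not> f l1 \<le> N" using False by blast
    show ?thesis using ev_ge[OF l1(2)]
    proof (rule eventually_mono)
      fix l assume "l1 \<le> l \<and> l < mu"
      then have "f l1 \<le> f l" using mono l1 by simp
      then show "N \<le> f l" using l1 by simp
    qed
  qed
  then show ?thesis by blast
qed

lemma dichot_ev:
  fixes f :: "real \<Rightarrow> nat"
  assumes "(\<exists>l0. 0 \<le> l0 \<and> l0 < mu \<and> (\<forall>l. l0 \<le> l \<and> l < mu \<longrightarrow> f l = f l0))"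
  shows "\<exists>v. eventually (\<lambda>l. f l = v) (at_left mu)"
proof -
  obtain l0 where l0: "0 \<le> l0" "l0 < mu" "\<forall>l. l0 \<le> l \<and> l < mu \<longrightarrow> f l = f l0" using assms by blast
  have "eventually (\<lambda>l. f l = f l0) (at_left mu)"
    using ev_ge[OF l0(2)] by (rule eventually_mono) (use l0(3) in blast)
  then show ?thesis by blast
qed

end

context mt begin

lemma orb_mono: "H \<subseteq> H' \<Longrightarrow> orb H y \<subseteq> orb H' y"
  unfolding orb_def by (rule image_mono)

lemma stH_mono: "H \<subseteq> H' \<Longrightarrow> stH H y \<subseteq> stH H' y"
  unfolding stH_def by blast

lemma stH_pos:
  assumes "subgroup H G" "finite H" "y \<in> X"
  shows "0 < card (stH H y)"
proof -
  have "\<one> \<in> stH H y" unfolding stH_def using subgroup.one_closed[OF assms(1)] phi_one[OF assms(3)] by simp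
  moreover have "finite (stH H y)" unfolding stH_def using assms(2) by simp
  ultimately show ?thesis using card_gt_0_iff by blast
qed

lemma stab_unb:
  assumes mpos: "0 < mu"
    and unb: "\<forall>N. eventually (\<lambda>l. N \<le> card (K l)) (at_left mu)"
  shows "\<exists>l1. 0 \<le> l1 \<and> l1 < mu \<and> (\<forall>l. l1 \<le> l \<and> l < mu \<longrightarrow> c mu (K l1) \<le> c mu (K l))"
proof -
  define F where "F = (at_left mu :: real filter)"
  have Fnb: "F \<noteq> bot" unfolding F_def by simp
  define p where "p l y = card (orb (K l) y \<inter> Y)" for l y
  define s where "s l y = card (stH (K l) y)" for l y
  have p_mono: "p l y \<le> p l' y" if "0 \<le> l" "l \<le> l'" "l' < mu" for l l' y
  proof -
    have "orb (K l) y \<inter> Y \<subseteq> orb (K l') y \<inter> Y" using orb_mono[OF K_mono[OF that]] by blast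
    then show ?thesis unfolding p_def using finY by (intro card_mono) auto
  qed
  have s_mono: "s l y \<le> s l' y" if "0 \<le> l" "l \<le> l'" "l' < mu" for l l' y
  proof -
    have "stH (K l) y \<subseteq> stH (K l') y" using stH_mono[OF K_mono[OF that]] .
    moreover have "finite (stH (K l') y)" unfolding stH_def using K_fin that by simp
    ultimately show ?thesis unfolding s_def by (intro card_mono) auto
  qed
  have p_le: "p l y \<le> card Y" for l y
    unfolding p_def using finY by (intro card_mono) auto
  have p_ev: "\<exists>v. eventually (\<lambda>l. p l y = v) F" for y
  proof -
    have md: "(\<exists>l0. 0 \<le> l0 \<and> l0 < mu \<and> (\<forall>l. l0 \<le> l \<and> l < mu \<longrightarrow> p l y = p l0 y))
         \<or> (\<forall>N. eventually (\<lambda>l. N \<le> p l y) (at_left mu))"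
      by (rule mono_dichot[OF _ mpos]) (rule p_mono)
    show ?thesis
    proof (cases "\<forall>N. eventually (\<lambda>l. N \<le> p l y) (at_left mu)")
      case True
      then have "eventually (\<lambda>l. Suc (card Y) \<le> p l y) (at_left mu)" by blast
      then have "eventually (\<lambda>l. False) (at_left mu)"
        by (rule eventually_mono) (use p_le in \<open>metis not_less_eq_eq\<close>)
      then show ?thesis by simp
    next
      case False
      then show ?thesis using md dichot_ev[of "\<lambda>l. p l y"] unfolding F_def by blast
    qed
  qed
  have "\<forall>y. \<exists>v. eventually (\<lambda>l. p l y = v) F" using p_ev by blast
  then have "\<exists>pv. \<forall>y. eventually (\<lambda>l. p l y = pv y) F" by (rule choice)
  then obtain pv where pv0: "\<forall>y. eventually (\<lambda>l. p l y = pv y) F" by blast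
  then have pv: "\<forall>y\<in>Y. eventually (\<lambda>l. p l y = pv y) F" by blast
  define Ss where "Ss = {y\<in>Y. \<exists>v. eventually (\<lambda>l. s l y = v) F}"
  have "\<forall>y\<in>Ss. \<exists>v. eventually (\<lambda>l. s l y = v) F" unfolding Ss_def by blast
  then have "\<exists>sv. \<forall>y\<in>Ss. eventually (\<lambda>l. s l y = sv y) F" by (rule bchoice)
  then obtain sv where sv: "\<forall>y\<in>Ss. eventually (\<lambda>l. s l y = sv y) F" by blast
  have U_unb: "eventually (\<lambda>l. N \<le> s l y) F" if y: "y \<in> Y - Ss" for y N
  proof -
    have md: "(\<exists>l0. 0 \<le> l0 \<and> l0 < mu \<and> (\<forall>l. l0 \<le> l \<and> l < mu \<longrightarrow> s l y = s l0 y))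
         \<or> (\<forall>N. eventually (\<lambda>l. N \<le> s l y) (at_left mu))"
      by (rule mono_dichot[OF _ mpos]) (rule s_mono)
    have "\<not> (\<exists>v. eventually (\<lambda>l. s l y = v) F)" using y unfolding Ss_def by blast
    then show ?thesis using md dichot_ev[of "\<lambda>l. s l y"] unfolding F_def by blast
  qed
  have finSs: "finite Ss" unfolding Ss_def using finY by simp
  have finU: "finite (Y - Ss)" using finY by simp
  have SsY: "Ss \<subseteq> Y" unfolding Ss_def by blast
  define \<delta> where "\<delta> = (\<Sum>y\<in>Ss. 1 / (real (sv y) * real (pv y))) - mu"
  define R where "R l = (\<Sum>y\<in>Y - Ss. real (card (orb (K l) y)) / real (pv y))" for l
  have E1: "eventually (\<lambda>l. (0 \<le> l \<and> l < mu) \<and> (\<forall>y\<in>Y. p l y = pv y) \<and> (\<forall>y\<in>Ss. s l y = sv y)) F"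
  proof -
    have e1: "eventually (\<lambda>l. 0 \<le> l \<and> l < mu) F" unfolding F_def using ev_ge[OF mpos] .
    have e2: "eventually (\<lambda>l. \<forall>y\<in>Y. p l y = pv y) F" using eventually_ball_finite[OF finY pv] .
    have e3: "eventually (\<lambda>l. \<forall>y\<in>Ss. s l y = sv y) F" using eventually_ball_finite[OF finSs sv] .
    show ?thesis using eventually_conj[OF e1 eventually_conj[OF e2 e3]] .
  qed
  have pv_pos: "1 \<le> pv y" if yY: "y \<in> Y" for y
  proof -
    obtain l where l: "0 \<le> l \<and> l < mu" "p l y = pv y"
      using eventually_happens'[OF Fnb eventually_conj[OF E1 bspec[OF pv yY]]] by blast
    have "y \<in> orb (K l) y \<inter> Y" using orb_self[OF K_sub] l(1) yY YX by blast
    then have "0 < p l y" unfolding p_def using finY card_gt_0_iff by blast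
    then show ?thesis using l(2) by simp
  qed
  have R_nonneg: "0 \<le> R l" for l unfolding R_def by (intro sum_nonneg) simp
  have key: "eventually (\<lambda>l. c mu (K l) = real (card (K l)) * \<delta> + R l) F"
    using E1
  proof (rule eventually_mono)
    fix l assume l: "(0 \<le> l \<and> l < mu) \<and> (\<forall>y\<in>Y. p l y = pv y) \<and> (\<forall>y\<in>Ss. s l y = sv y)"
    define H where "H = K l"
    have Hs: "subgroup H G" and Hf: "finite H" using K_sub K_fin l unfolding H_def by auto
    have "real (card (AY H)) = (\<Sum>y\<in>Y. real (card (orb H y)) / real (card (orb H y \<inter> Y)))"
      using orbit_sum[OF Hs Hf] .
    also have "\<dots> = (\<Sum>y\<in>Y. real (card (orb H y)) / real (pv y))"
      by (rule sum.cong[OF refl]) (use l in \<open>simp add: p_def H_def\<close>)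
    also have "\<dots> = (\<Sum>y\<in>Y - Ss. real (card (orb H y)) / real (pv y)) + (\<Sum>y\<in>Ss. real (card (orb H y)) / real (pv y))"
      using sum.subset_diff[OF SsY finY] by simp
    also have "(\<Sum>y\<in>Ss. real (card (orb H y)) / real (pv y)) = (\<Sum>y\<in>Ss. real (card H) * (1 / (real (sv y) * real (pv y))))"
    proof (rule sum.cong[OF refl])
      fix y assume y: "y \<in> Ss"
      then have yX: "y \<in> X" using SsY YX by blast
      have "card (orb H y) * card (stH H y) = card H" using orb_stab[OF Hs yX] .
      moreover have "card (stH H y) = sv y" using l y unfolding s_def H_def by simp
      moreover have "0 < card (stH H y)" using stH_pos[OF Hs Hf yX] .
      ultimately have e: "real (card (orb H y)) * real (sv y) = real (card H)" and svp: "0 < real (sv y)"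
        by (metis of_nat_mult, simp)
      have "real (card (orb H y)) = real (card H) / real (sv y)" using e svp by (simp add: field_simps)
      then show "real (card (orb H y)) / real (pv y) = real (card H) * (1 / (real (sv y) * real (pv y)))"
        by simp
    qed
    also have "\<dots> = real (card H) * (\<Sum>y\<in>Ss. 1 / (real (sv y) * real (pv y)))"
      by (simp add: sum_distrib_left)
    finally have "real (card (AY H)) = R l + real (card H) * (\<delta> + mu)"
      unfolding R_def \<delta>_def H_def by simp
    then show "c mu (K l) = real (card (K l)) * \<delta> + R l"
      unfolding c_def2 H_def by (simp add: algebra_simps)
  qed
  have KB: "eventually (\<lambda>l. 0 \<le> c mu (K l) \<and> c mu (K l) \<le> real (card Y)) F"
    using E1 by (rule eventually_mono) (use K_bounds in blast)
  consider "\<delta> > 0" | "\<delta> < 0" | "\<delta> = 0" by linarith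
  then show ?thesis
  proof cases
    case 1
    define N where "N = nat \<lceil>real (card Y) / \<delta>\<rceil> + 1"
    have "real (card Y) / \<delta> < real N" unfolding N_def by linarith
    then have NY: "real (card Y) < real N * \<delta>" using 1 by (simp add: field_simps)
    have "eventually (\<lambda>l. N \<le> card (K l)) F" using unb F_def by blast
    then have "eventually (\<lambda>l. False) F"
      using key KB
    proof (eventually_elim)
      case (elim l)
      have "real N * \<delta> \<le> real (card (K l)) * \<delta>" using elim(1) 1 by (intro mult_right_mono) auto
      then show False using elim NY R_nonneg[of l] by linarith
    qed
    then show ?thesis using Fnb eventually_False by blast
  next
    case 2
    define N where "N = nat \<lceil>real (card Y) / (- \<delta>)\<rceil> + 1"
    have "real (card Y) / (- \<delta>) < real N" unfolding N_def by linarith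
    then have NY: "real (card Y) < real N * (- \<delta>)" using 2 by (simp add: field_simps)
    have Npos: "0 < real N" unfolding N_def by simp
    have "eventually (\<lambda>l. \<forall>y\<in>Y - Ss. N \<le> s l y) F"
      using U_unb by (intro eventually_ball_finite[OF finU] ballI)
    then have "eventually (\<lambda>l. False) F"
      using key KB E1
    proof (eventually_elim)
      case (elim l)
      define H where "H = K l"
      have Hs: "subgroup H G" and Hf: "finite H" using K_sub K_fin elim(4) unfolding H_def by auto
      have bnd: "real (card (orb H y)) / real (pv y) \<le> real (card H) / real N" if y: "y \<in> Y - Ss" for y
      proof -
        have yX: "y \<in> X" using y YX by blast
        have e: "real (card (orb H y)) * real (card (stH H y)) = real (card H)"
          using orb_stab[OF Hs yX] by (metis of_nat_mult)
        have sN: "real N \<le> real (card (stH H y))" using elim(1) y unfolding s_def H_def by simp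
        have "real (card (orb H y)) * real N \<le> real (card (orb H y)) * real (card (stH H y))"
          using sN by (intro mult_left_mono) auto
        then have o1: "real (card (orb H y)) \<le> real (card H) / real N"
          using e Npos by (simp add: field_simps)
        have p1: "1 \<le> real (pv y)" using pv_pos[of y] y by simp
        have "real (card (orb H y)) * 1 \<le> real (card (orb H y)) * real (pv y)"
          by (rule mult_left_mono[OF p1]) simp
        then have "real (card (orb H y)) / real (pv y) \<le> real (card (orb H y))"
          using p1 by (simp add: divide_le_eq)
        then show ?thesis using o1 by linarith
      qed
      have "R l \<le> real (card (Y - Ss)) * (real (card H) / real N)"
        unfolding R_def H_def[symmetric] by (rule sum_bounded_above) (use bnd in blast)
      also have "\<dots> \<le> real (card Y) * (real (card H) / real N)"
        using finY by (intro mult_right_mono) (auto intro: card_mono)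
      also have "\<dots> < real N * (- \<delta>) * (real (card H) / real N)"
      proof (rule mult_strict_right_mono[OF NY])
        have "0 < card H" using Hf subgroup.one_closed[OF Hs] card_gt_0_iff by blast
        then show "0 < real (card H) / real N" using Npos by simp
      qed
      also have "\<dots> = - \<delta> * real (card H)" using Npos by simp
      finally have "R l < - \<delta> * real (card H)" .
      then have "c mu (K l) < 0" using elim(2) unfolding H_def by (simp add: algebra_simps)
      then show False using elim(3) by linarith
    qed
    then show ?thesis using Fnb eventually_False by blast
  next
    case 3
    have "eventually (\<lambda>l. c mu (K l) = R l \<and> 0 \<le> l \<and> l < mu) F"
      using key E1 by eventually_elim (use 3 in simp)
    then obtain l1 where l1: "0 \<le> l1" "l1 < mu" "\<forall>l. l1 \<le> l \<and> l < mu \<longrightarrow> c mu (K l) = R l \<and> 0 \<le> l \<and> l < mu"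
      using ev_obtain[OF _ mpos] unfolding F_def by blast
    show ?thesis
    proof (intro exI[of _ l1] conjI allI impI)
      show "0 \<le> l1" "l1 < mu" using l1 by auto
      fix l assume l: "l1 \<le> l \<and> l < mu"
      have "R l1 \<le> R l" unfolding R_def
      proof (rule sum_mono)
        fix y assume "y \<in> Y - Ss"
        have "orb (K l1) y \<subseteq> orb (K l) y" using orb_mono[OF K_mono] l l1 by simp
        then have "card (orb (K l1) y) \<le> card (orb (K l) y)"
          using orb_finite K_fin l l1 by (intro card_mono) auto
        then show "real (card (orb (K l1) y)) / real (pv y) \<le> real (card (orb (K l) y)) / real (pv y)"
          by (intro divide_right_mono) auto
      qed
      then show "c mu (K l1) \<le> c mu (K l)" using l1(3) l l1(1,2) by auto
    qed
  qed
qed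

end

context mt begin

lemma stab_all:
  assumes mpos: "0 < mu"
  shows "\<exists>l1. 0 \<le> l1 \<and> l1 < mu \<and> (\<forall>l. l1 \<le> l \<and> l < mu \<longrightarrow> c mu (K l1) \<le> c mu (K l))"
proof -
  have mono: "card (K l) \<le> card (K l')" if "0 \<le> l" "l \<le> l'" "l' < mu" for l l'
  proof -
    have "0 \<le> l'" using that by simp
    then have "finite (K l')" using K_fin that(3) by simp
    then show ?thesis using K_mono[OF that] by (rule card_mono)
  qed
  have md: "(\<exists>l0. 0 \<le> l0 \<and> l0 < mu \<and> (\<forall>l. l0 \<le> l \<and> l < mu \<longrightarrow> card (K l) = card (K l0)))
         \<or> (\<forall>N. eventually (\<lambda>l. N \<le> card (K l)) (at_left mu))"
    by (rule mono_dichot[OF _ mpos]) (rule mono)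
  show ?thesis
  proof (cases "\<forall>N. eventually (\<lambda>l. N \<le> card (K l)) (at_left mu)")
    case True
    then show ?thesis by (rule stab_unb[OF mpos])
  next
    case False
    have "\<exists>l0. 0 \<le> l0 \<and> l0 < mu \<and> (\<forall>l. l0 \<le> l \<and> l < mu \<longrightarrow> card (K l) = card (K l0))"
      using md False by (elim disjE) simp_all
    then obtain l0 where l0: "0 \<le> l0" "l0 < mu" "\<forall>l. l0 \<le> l \<and> l < mu \<longrightarrow> card (K l) = card (K l0)"
      by blast
    show ?thesis
    proof (intro exI[of _ l0] conjI allI impI)
      show "0 \<le> l0" "l0 < mu" using l0 by auto
      fix l assume l: "l0 \<le> l \<and> l < mu"
      have l00: "0 \<le> l" using l l0 by simp
      have sub: "K l0 \<subseteq> K l" using K_mono[of l0 l] l0(1) l by simp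
      have fin: "finite (K l)" using K_fin[OF l00] l by simp
      have "card (K l) = card (K l0)" using l0(3) l by blast
      then have "card (K l) \<le> card (K l0)" by simp
      then have "K l0 = K l" using card_seteq[OF fin sub] by simp
      then show "c mu (K l0) \<le> c mu (K l)" by simp
    qed
  qed
qed

lemma second_ineq:
  assumes "subgroup H G" "finite H"
  shows "real (card Y) - lam * real (card H) \<le> c lam H"
proof -
  have "\<one> \<in> H" using subgroup.one_closed[OF assms(1)] .
  then have "Y \<subseteq> AY H" by (rule Y_sub_AY)
  then have "card Y \<le> card (AY H)" using AY_finite[OF assms(2)] by (intro card_mono)
  then show ?thesis unfolding c_def2 by simp
qed

lemma main_mt:
  "mu = 0 \<or>
    (\<forall>lam::real. 0 \<le> lam \<and> lam \<le> mu \<longrightarrow>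
      (\<exists>H. subgroup H G \<and> finite H \<and> set_stabilizer G \<phi> Y \<subseteq> H \<and>
        (\<forall>A. A \<subseteq> carrier G \<and> finite A \<and> A \<noteq> {} \<longrightarrow>
           c lam A \<ge> c lam H \<and>
           c lam H \<ge> real (card Y) - lam * real (card H))))"
proof (cases "mu = 0")
  case True then show ?thesis by simp
next
  case False
  then have mpos: "0 < mu" using mu_nonneg by linarith
  have "\<exists>H. subgroup H G \<and> finite H \<and> set_stabilizer G \<phi> Y \<subseteq> H \<and>
        (\<forall>A. A \<subseteq> carrier G \<and> finite A \<and> A \<noteq> {} \<longrightarrow>
           c lam A \<ge> c lam H \<and>
           c lam H \<ge> real (card Y) - lam * real (card H))" if lam: "0 \<le> lam" "lam \<le> mu" for lam
  proof (cases "lam < mu")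
    case True
    define H where "H = K lam"
    have g: "good lam H" unfolding H_def using K_good lam True by simp
    then have Hs: "subgroup H G" "finite H" "set_stabilizer G \<phi> Y \<subseteq> H" unfolding good_def by auto
    show ?thesis
    proof (intro exI[of _ H] conjI allI impI)
      show "subgroup H G" "finite H" "set_stabilizer G \<phi> Y \<subseteq> H" using Hs by auto
      fix A assume "A \<subseteq> carrier G \<and> finite A \<and> A \<noteq> {}"
      then have "A \<in> PP" unfolding PP_def by simp
      then show "c lam H \<le> c lam A" using good_minz[OF g] unfolding minz_def by simp
      show "real (card Y) - lam * real (card H) \<le> c lam H" using second_ineq Hs by simp
    qed
  next
    case False
    then have lm: "lam = mu" using lam by simp
    obtain l1 where l1: "0 \<le> l1" "l1 < mu" "\<forall>l. l1 \<le> l \<and> l < mu \<longrightarrow> c mu (K l1) \<le> c mu (K l)"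
      using stab_all[OF mpos] by blast
    define H where "H = K l1"
    have g: "good l1 H" unfolding H_def using K_good l1 by simp
    then have Hs: "subgroup H G" "finite H" "set_stabilizer G \<phi> Y \<subseteq> H" unfolding good_def by auto
    show ?thesis
    proof (intro exI[of _ H] conjI allI impI)
      show "subgroup H G" "finite H" "set_stabilizer G \<phi> Y \<subseteq> H" using Hs by auto
      fix A assume "A \<subseteq> carrier G \<and> finite A \<and> A \<noteq> {}"
      then have AP: "A \<in> PP" unfolding PP_def by simp
      have lim: "((\<lambda>l. c l A) \<longlongrightarrow> c mu A) (at_left mu)"
        unfolding c_def2 by (intro tendsto_intros)
      have ev: "eventually (\<lambda>l. c mu H \<le> c l A) (at_left mu)"
        using ev_ge[OF l1(2)]
      proof (rule eventually_mono)
        fix l assume l: "l1 \<le> l \<and> l < mu"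
        have l0: "0 \<le> l" using l l1 by simp
        have "c mu H \<le> c mu (K l)" using l1(3) l unfolding H_def by simp
        also have "\<dots> \<le> c l (K l)" using c_mono_l l by simp
        also have "\<dots> \<le> c l A" using good_minz[OF K_good[OF l0]] AP l unfolding minz_def by simp
        finally show "c mu H \<le> c l A" .
      qed
      have "c mu H \<le> c mu A"
        using tendsto_lowerbound[OF lim ev] by simp
      then show "c lam H \<le> c lam A" using lm by simp
      show "real (card Y) - lam * real (card H) \<le> c lam H" using second_ineq Hs by simp
    qed
  qed
  then show ?thesis by blast
qed

end

theorem mainTheorem8:
  fixes G :: "('a, 'c) monoid_scheme" and X :: "'b set" and \<phi> :: "'a \<Rightarrow> 'b \<Rightarrow> 'b" and Y :: "'b set"
  assumes "group_action G X \<phi>"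
    and "finite Y" and "Y \<subseteq> X"
  shows "mu_ratio G \<phi> Y = 0 \<or>
    (\<forall>lam::real. 0 \<le> lam \<and> lam \<le> mu_ratio G \<phi> Y \<longrightarrow>
      (\<exists>H. subgroup H G \<and> finite H \<and> set_stabilizer G \<phi> Y \<subseteq> H \<and>
        (\<forall>A. A \<subseteq> carrier G \<and> finite A \<and> A \<noteq> {} \<longrightarrow>
           cY \<phi> Y lam A \<ge> cY \<phi> Y lam H \<and>
           cY \<phi> Y lam H \<ge> real (card Y) - lam * real (card H))))"
proof -
  have "mt G X \<phi> Y" using assms by (simp add: mt_def mt_axioms_def)
  then show ?thesis by (rule mt.main_mt)
qed

end
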